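(* Let $G=\{1,\rho\}\le S_n$ be a 2-element subgroup whose non-identity element $\rho$ is a product of pairwise disjoint transpositions. Then $B_n/G$ is a symmetric chain order.
   Context: A finite poset $P$ is ranked if it has a minimum element and all saturated chains from the minimum to any $x$ have the same length $r(x)$; $r(P)=\max_x r(x)$. A chain $x_1<\dots<x_k$ is symmetric if it is saturated and $r(x_1)+r(x_k)=r(P)$; a symmetric chain order (SCO) is a ranked poset that can be partitioned into symmetric chains. $B_n$ is the Boolean lattice of subsets of $[n]$; $S_n$ acts by $\sigma(A)=\sigma[A]$, and for $G\le S_n$, $B_n/G$ is the poset of $G$-orbits $[A]$ with $[A]\le[B]$ iff $X\subseteq Y$ for some $X\in[A]$, $Y\in[B]$. *)

theory Defs
  imports Main "HOL-Combinatorics.Permutations"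
begin

definition poset_on :: "'a set \<Rightarrow> ('a \<Rightarrow> 'a \<Rightarrow> bool) \<Rightarrow> bool" where
  "poset_on P le \<longleftrightarrow>
     (\<forall>x\<in>P. le x x) \<and>
     (\<forall>x\<in>P. \<forall>y\<in>P. le x y \<and> le y x \<longrightarrow> x = y) \<and>
     (\<forall>x\<in>P. \<forall>y\<in>P. \<forall>z\<in>P. le x y \<and> le y z \<longrightarrow> le x z)"

definition covers :: "'a set \<Rightarrow> ('a \<Rightarrow> 'a \<Rightarrow> bool) \<Rightarrow> 'a \<Rightarrow> 'a \<Rightarrow> bool" where
  "covers P le x y \<longleftrightarrow> x \<in> P \<and> y \<in> P \<and> le x y \<and> x \<noteq> y \<and>
     \<not> (\<exists>z\<in>P. le x z \<and> x \<noteq> z \<and> le z y \<and> z \<noteq> y)"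

definition saturated_chain :: "'a set \<Rightarrow> ('a \<Rightarrow> 'a \<Rightarrow> bool) \<Rightarrow> 'a list \<Rightarrow> bool" where
  "saturated_chain P le xs \<longleftrightarrow> xs \<noteq> [] \<and> set xs \<subseteq> P \<and>
     (\<forall>i. Suc i < length xs \<longrightarrow> covers P le (xs ! i) (xs ! Suc i))"

definition is_minimum :: "'a set \<Rightarrow> ('a \<Rightarrow> 'a \<Rightarrow> bool) \<Rightarrow> 'a \<Rightarrow> bool" where
  "is_minimum P le m \<longleftrightarrow> m \<in> P \<and> (\<forall>x\<in>P. le m x)"

definition ranked :: "'a set \<Rightarrow> ('a \<Rightarrow> 'a \<Rightarrow> bool) \<Rightarrow> bool" where
  "ranked P le \<longleftrightarrow> (\<exists>m. is_minimum P le m \<and>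
     (\<forall>x\<in>P. \<forall>xs ys.
        saturated_chain P le xs \<and> hd xs = m \<and> last xs = x \<and>
        saturated_chain P le ys \<and> hd ys = m \<and> last ys = x \<longrightarrow> length xs = length ys))"

(* rank r(x): length (number of covering steps) of a saturated chain from the minimum to x *)
definition rank_of :: "'a set \<Rightarrow> ('a \<Rightarrow> 'a \<Rightarrow> bool) \<Rightarrow> 'a \<Rightarrow> nat" where
  "rank_of P le x = (THE k. \<exists>xs. saturated_chain P le xs \<and>
       hd xs = (THE m. is_minimum P le m) \<and> last xs = x \<and> length xs = Suc k)"

definition poset_rank :: "'a set \<Rightarrow> ('a \<Rightarrow> 'a \<Rightarrow> bool) \<Rightarrow> nat" where
  "poset_rank P le = Max (rank_of P le ` P)"

definition symmetric_chain :: "'a set \<Rightarrow> ('a \<Rightarrow> 'a \<Rightarrow> bool) \<Rightarrow> 'a list \<Rightarrow> bool" where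
  "symmetric_chain P le xs \<longleftrightarrow> saturated_chain P le xs \<and>
     rank_of P le (hd xs) + rank_of P le (last xs) = poset_rank P le"

definition SCO :: "'a set \<Rightarrow> ('a \<Rightarrow> 'a \<Rightarrow> bool) \<Rightarrow> bool" where
  "SCO P le \<longleftrightarrow> finite P \<and> poset_on P le \<and> ranked P le \<and>
     (\<exists>C. (\<forall>c\<in>C. symmetric_chain P le c) \<and> (\<forall>x\<in>P. \<exists>!c. c \<in> C \<and> x \<in> set c))"

definition orbit_set :: "(nat \<Rightarrow> nat) set \<Rightarrow> nat set \<Rightarrow> nat set set" where
  "orbit_set G A = (\<lambda>\<sigma>. \<sigma> ` A) ` G"

definition Bn_quot :: "nat \<Rightarrow> (nat \<Rightarrow> nat) set \<Rightarrow> nat set set set" where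
  "Bn_quot n G = {orbit_set G A | A. A \<subseteq> {1..n}}"

definition Bn_quot_le :: "nat set set \<Rightarrow> nat set set \<Rightarrow> bool" where
  "Bn_quot_le X Y \<longleftrightarrow> (\<exists>A\<in>X. \<exists>B\<in>Y. A \<subseteq> B)"

end

theory Submission
  imports Defs
begin



definition chn :: "('a \<Rightarrow> 'a \<Rightarrow> bool) \<Rightarrow> ('a \<Rightarrow> nat) \<Rightarrow> 'a list \<Rightarrow> bool" where
  "chn st r c \<longleftrightarrow> (\<forall>i. Suc i < length c \<longrightarrow> st (c!i) (c!Suc i) \<and> r (c!Suc i) = Suc (r (c!i)))"

definition qscd :: "'a set \<Rightarrow> ('a \<Rightarrow> 'b) \<Rightarrow> ('a \<Rightarrow> 'a \<Rightarrow> bool) \<Rightarrow> ('a \<Rightarrow> nat) \<Rightarrow> nat \<Rightarrow> 'a list set \<Rightarrow> bool" where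
  "qscd S f st r N C \<longleftrightarrow> (\<forall>c\<in>C. c \<noteq> [] \<and> set c \<subseteq> S \<and> chn st r c \<and> r (hd c) + r (last c) = N) \<and>
     (\<forall>x\<in>S. \<exists>!c. c \<in> C \<and> (\<exists>y\<in>set c. f y = f x))"

lemma chn_rank:
  assumes "chn st r c" "i < length c" shows "r (c!i) = r (c!0) + i"
  using assms(2)
proof (induction i)
  case (Suc i) thus ?case using assms(1) unfolding chn_def by auto
qed simp

lemma chn_inj:
  assumes "chn st r c" "i < length c" "j < length c" "c!i = c!j" shows "i = j"
  using chn_rank[OF assms(1,2)] chn_rank[OF assms(1,3)] assms(4) by (metis add_left_cancel)

lemma chn_last:
  assumes "chn st r c" "c \<noteq> []" shows "r (last c) = r (hd c) + (length c - 1)"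
  using chn_rank[OF assms(1), of "length c - 1"] assms(2) by (simp add: last_conv_nth hd_conv_nth)

lemma qscd_transfer:
  assumes q: "qscd S f st r N C" and img: "g ` S = S'"
    and stp: "\<And>x y. x \<in> S \<Longrightarrow> y \<in> S \<Longrightarrow> st x y \<Longrightarrow> st' (g x) (g y)"
    and rk: "\<And>x. x \<in> S \<Longrightarrow> r' (g x) = r x"
    and eqv: "\<And>x y. x \<in> S \<Longrightarrow> y \<in> S \<Longrightarrow> f' (g x) = f' (g y) \<longleftrightarrow> f x = f y"
  shows "qscd S' f' st' r' N (map g ` C)"
  unfolding qscd_def
proof (intro conjI ballI)
  fix c' assume "c' \<in> map g ` C"
  then obtain c where c: "c \<in> C" "c' = map g c" by auto
  have cc: "c \<noteq> []" "set c \<subseteq> S" "chn st r c" "r (hd c) + r (last c) = N"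
    using q c unfolding qscd_def by auto
  show "c' \<noteq> []" using cc c by simp
  show "set c' \<subseteq> S'" using cc c img by auto
  show "chn st' r' c'" unfolding c chn_def
  proof (intro allI impI)
    fix i assume i: "Suc i < length (map g c)"
    have m: "c!i \<in> S" "c!Suc i \<in> S" using i cc(2) by (auto simp: subset_iff)
    have "st (c!i) (c!Suc i) \<and> r (c!Suc i) = Suc (r (c!i))" using cc(3) i unfolding chn_def by simp
    thus "st' (map g c ! i) (map g c ! Suc i) \<and> r' (map g c ! Suc i) = Suc (r' (map g c ! i))"
      using stp[OF m] rk[OF m(1)] rk[OF m(2)] i by simp
  qed
  show "r' (hd c') + r' (last c') = N" using cc c
  proof -
    have "hd c \<in> S" "last c \<in> S" using cc(1,2) by auto
    thus ?thesis using cc c rk by (simp add: hd_map last_map)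
  qed
next
  fix x' assume "x' \<in> S'"
  then obtain x where x: "x \<in> S" "x' = g x" using img by auto
  have "\<exists>!c. c \<in> C \<and> (\<exists>y\<in>set c. f y = f x)" using q x(1) unfolding qscd_def by blast
  then obtain c where c: "c \<in> C" "\<exists>y\<in>set c. f y = f x"
    and u: "\<And>d. d \<in> C \<Longrightarrow> (\<exists>y\<in>set d. f y = f x) \<Longrightarrow> d = c"
    by blast
  have sub: "\<And>d. d \<in> C \<Longrightarrow> set d \<subseteq> S" using q unfolding qscd_def by auto
  show "\<exists>!c'. c' \<in> map g ` C \<and> (\<exists>y\<in>set c'. f' y = f' x')"
  proof (rule ex1I[of _ "map g c"])
    show "map g c \<in> map g ` C \<and> (\<exists>y\<in>set (map g c). f' y = f' x')"
    proof -
      obtain y where y: "y \<in> set c" "f y = f x" using c by auto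
      have "f' (g y) = f' (g x)" using eqv[of y x] y sub[OF c(1)] x(1) by blast
      thus ?thesis using c(1) y(1) x(2) by auto
    qed
  next
    fix d' assume "d' \<in> map g ` C \<and> (\<exists>y\<in>set d'. f' y = f' x')"
    then obtain d y where d: "d \<in> C" "d' = map g d" "y \<in> set d" "f' (g y) = f' (g x)" using x by auto
    have "f y = f x" using eqv[of y x] d(3,4) sub[OF d(1)] x(1) by blast
    thus "d' = map g c" using u[OF d(1)] d by auto
  qed
qed

definition gpt :: "nat \<Rightarrow> nat \<Rightarrow> nat \<Rightarrow> nat \<times> nat" where
  "gpt q k m = (if m < q - k then (k, m) else (m - (q - k) + k + 1, q - 1 - k))"

definition glen :: "nat \<Rightarrow> nat \<Rightarrow> nat \<Rightarrow> nat" where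
  "glen p q k = (q - k) + (p - 1 - k)"

lemma gpt_sum: "m < glen p q k \<Longrightarrow> k < min p q \<Longrightarrow> fst (gpt q k m) + snd (gpt q k m) = k + m"
  by (auto simp: gpt_def glen_def)

lemma gpt_step: "Suc m < glen p q k \<Longrightarrow> k < min p q \<Longrightarrow>
   (fst (gpt q k (Suc m)) = Suc (fst (gpt q k m)) \<and> snd (gpt q k (Suc m)) = snd (gpt q k m)) \<or>
   (fst (gpt q k (Suc m)) = fst (gpt q k m) \<and> snd (gpt q k (Suc m)) = Suc (snd (gpt q k m)))"
  by (auto simp: gpt_def glen_def)

lemma gpt_range: "m < glen p q k \<Longrightarrow> k < min p q \<Longrightarrow> fst (gpt q k m) < p \<and> snd (gpt q k m) < q"
  by (auto simp: gpt_def glen_def)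

lemma gpt_k: "m < glen p q k \<Longrightarrow> k < min p q \<Longrightarrow> gpt q k m = (a, b) \<Longrightarrow> k = min a (q - 1 - b)"
  by (auto simp: gpt_def glen_def split: if_splits)

lemma gpt_cover: assumes "a < p" "b < q"
  shows "\<exists>m < glen p q (min a (q - 1 - b)). gpt q (min a (q - 1 - b)) m = (a, b)"
proof (cases "a \<le> q - 1 - b")
  case True
  then show ?thesis using assms by (intro exI[of _ b]) (auto simp: gpt_def glen_def min_def)
next
  case False
  then show ?thesis using assms
    by (intro exI[of _ "a - (q - 1 - b) - 1 + (b + 1)"]) (auto simp: gpt_def glen_def min_def)
qed

definition tpt :: "nat \<Rightarrow> nat \<Rightarrow> nat \<Rightarrow> nat \<times> nat" where
  "tpt p k m = (if m < p - 2*k then (k, k + m) else (m - (p - 2*k) + k + 1, p - 1 - k))"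

definition tlen :: "nat \<Rightarrow> nat \<Rightarrow> nat" where
  "tlen p k = (p - 2*k) + (p - 1 - 2*k)"

lemma tpt_sum: "m < tlen p k \<Longrightarrow> 2*k < p \<Longrightarrow> fst (tpt p k m) + snd (tpt p k m) = 2*k + m"
  by (auto simp: tpt_def tlen_def)

lemma tpt_step: "Suc m < tlen p k \<Longrightarrow> 2*k < p \<Longrightarrow>
   (fst (tpt p k (Suc m)) = Suc (fst (tpt p k m)) \<and> snd (tpt p k (Suc m)) = snd (tpt p k m)) \<or>
   (fst (tpt p k (Suc m)) = fst (tpt p k m) \<and> snd (tpt p k (Suc m)) = Suc (snd (tpt p k m)))"
  by (auto simp: tpt_def tlen_def)

lemma tpt_range: "m < tlen p k \<Longrightarrow> 2*k < p \<Longrightarrow> fst (tpt p k m) \<le> snd (tpt p k m) \<and> snd (tpt p k m) < p \<and> fst (tpt p k m) < p"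
  by (auto simp: tpt_def tlen_def)

lemma tpt_k: "m < tlen p k \<Longrightarrow> 2*k < p \<Longrightarrow> tpt p k m = (a, b) \<Longrightarrow> k = min a (p - 1 - b)"
  by (auto simp: tpt_def tlen_def split: if_splits)

lemma tpt_cover: assumes "a \<le> b" "b < p"
  shows "2 * min a (p - 1 - b) < p \<and> (\<exists>m < tlen p (min a (p - 1 - b)). tpt p (min a (p - 1 - b)) m = (a, b))"
proof (cases "a \<le> p - 1 - b")
  case True
  then show ?thesis using assms by (intro conjI exI[of _ "b - a"]) (auto simp: tpt_def tlen_def min_def)
next
  case False
  then show ?thesis using assms
    by (intro conjI exI[of _ "a - (p - 1 - b) - 1 + (p - 2 * (p - 1 - b))"]) (auto simp: tpt_def tlen_def min_def)
qed


lemma qscd_chains: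
  assumes "qscd S f st r N C" "c \<in> C"
  shows "c \<noteq> []" "set c \<subseteq> S" "chn st r c" "r (hd c) + r (last c) = N"
  using assms unfolding qscd_def by auto

lemma qscd_nth_S: "qscd S f st r N C \<Longrightarrow> c \<in> C \<Longrightarrow> i < length c \<Longrightarrow> c ! i \<in> S"
  using qscd_chains(2) nth_mem by blast

lemma qscd_center:
  assumes "qscd S f st r N C" "c \<in> C"
  shows "2 * r (c!0) + (length c - 1) = N"
  using qscd_chains[OF assms] chn_last[of st r c] by (simp add: hd_conv_nth)

lemma qscd_id_unique:
  assumes "qscd S id st r N C" "z \<in> S" "d \<in> C" "z \<in> set d" "d' \<in> C" "z \<in> set d'"
  shows "d = d'"
  using assms unfolding qscd_def by auto

lemma mapped_chain:
  fixes c1 c2 :: "'a list" and pt :: "nat \<Rightarrow> nat \<times> nat"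
  assumes q: "qscd S f st r N C" and c1: "c1 \<in> C" and c2: "c2 \<in> C"
    and L: "L \<ge> 1"
    and rng: "\<And>m. m < L \<Longrightarrow> fst (pt m) < length c1 \<and> snd (pt m) < length c2"
    and sm: "\<And>m. m < L \<Longrightarrow> fst (pt m) + snd (pt m) = kk + m"
    and stp: "\<And>m. Suc m < L \<Longrightarrow>
      (fst (pt (Suc m)) = Suc (fst (pt m)) \<and> snd (pt (Suc m)) = snd (pt m)) \<or>
      (fst (pt (Suc m)) = fst (pt m) \<and> snd (pt (Suc m)) = Suc (snd (pt m)))"
    and tot: "2 * kk + (L - 1) = (length c1 - 1) + (length c2 - 1)"
  defines "g \<equiv> map (\<lambda>m. (c1 ! fst (pt m), c2 ! snd (pt m))) [0..<L]"
  shows "g \<noteq> [] \<and> set g \<subseteq> S \<times> S \<and>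
     chn (\<lambda>(a,b) (c,d). (st a c \<and> b = d) \<or> (a = c \<and> st b d)) (\<lambda>(x,y). r x + r y) g \<and>
     (\<lambda>(x,y). r x + r y) (hd g) + (\<lambda>(x,y). r x + r y) (last g) = 2 * N"
proof -
  have ch1: "chn st r c1" and ch2: "chn st r c2" using qscd_chains(3)[OF q] c1 c2 by auto
  have rk: "(\<lambda>(x,y). r x + r y) (g ! m) = r (c1!0) + r (c2!0) + kk + m" if "m < L" for m
  proof -
    have "r (c1 ! fst (pt m)) = r (c1!0) + fst (pt m)" using chn_rank[OF ch1] rng[OF that] by blast
    moreover have "r (c2 ! snd (pt m)) = r (c2!0) + snd (pt m)" using chn_rank[OF ch2] rng[OF that] by blast
    ultimately show ?thesis using sm[OF that] that unfolding g_def by simp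
  qed
  have "g \<noteq> []" using L unfolding g_def by simp
  moreover have "set g \<subseteq> S \<times> S"
    unfolding g_def using rng qscd_nth_S[OF q c1] qscd_nth_S[OF q c2] by auto
  moreover have "chn (\<lambda>(a,b) (c,d). (st a c \<and> b = d) \<or> (a = c \<and> st b d)) (\<lambda>(x,y). r x + r y) g"
    unfolding chn_def
  proof (intro allI impI conjI)
    fix m assume m: "Suc m < length g"
    hence mL: "Suc m < L" by (simp add: g_def)
    show "(\<lambda>(x,y). r x + r y) (g ! Suc m) = Suc ((\<lambda>(x,y). r x + r y) (g ! m))"
      using rk[of m] rk[of "Suc m"] mL by simp
    have r1: "fst (pt (Suc m)) < length c1 \<and> snd (pt (Suc m)) < length c2" using rng mL by blast
    show "(\<lambda>(a,b) (c,d). (st a c \<and> b = d) \<or> (a = c \<and> st b d)) (g ! m) (g ! Suc m)"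
      using stp[OF mL]
    proof
      assume h: "fst (pt (Suc m)) = Suc (fst (pt m)) \<and> snd (pt (Suc m)) = snd (pt m)"
      hence "st (c1 ! fst (pt m)) (c1 ! Suc (fst (pt m)))" using ch1 r1 unfolding chn_def by auto
      thus ?thesis using h mL unfolding g_def by simp
    next
      assume h: "fst (pt (Suc m)) = fst (pt m) \<and> snd (pt (Suc m)) = Suc (snd (pt m))"
      hence "st (c2 ! snd (pt m)) (c2 ! Suc (snd (pt m)))" using ch2 r1 unfolding chn_def by auto
      thus ?thesis using h mL unfolding g_def by simp
    qed
  qed
  moreover have "(\<lambda>(x,y). r x + r y) (hd g) + (\<lambda>(x,y). r x + r y) (last g) = 2 * N"
  proof -
    have lg: "length g = L" by (simp add: g_def)
    have "hd g = g ! 0" "last g = g ! (L - 1)" using L lg \<open>g \<noteq> []\<close> by (auto simp: hd_conv_nth last_conv_nth)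
    hence "(\<lambda>(x,y). r x + r y) (hd g) + (\<lambda>(x,y). r x + r y) (last g)
        = 2 * (r (c1!0) + r (c2!0) + kk) + (L - 1)" using rk[of 0] rk[of "L - 1"] L by simp
    also have "\<dots> = (2 * r (c1!0) + (length c1 - 1)) + (2 * r (c2!0) + (length c2 - 1))"
      using tot by simp
    also have "\<dots> = 2 * N" using qscd_center[OF q c1] qscd_center[OF q c2] by simp
    finally show ?thesis .
  qed
  ultimately show ?thesis by blast
qed




definition GC :: "'a list \<Rightarrow> 'a list \<Rightarrow> nat \<Rightarrow> ('a \<times> 'a) list" where
  "GC c1 c2 k = map (\<lambda>m. (c1 ! fst (gpt (length c2) k m), c2 ! snd (gpt (length c2) k m)))
      [0..<glen (length c1) (length c2) k]"

definition TC :: "'a list \<Rightarrow> nat \<Rightarrow> ('a \<times> 'a) list" where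
  "TC c k = map (\<lambda>m. (c ! fst (tpt (length c) k m), c ! snd (tpt (length c) k m)))
      [0..<tlen (length c) k]"

definition upair :: "'a \<times> 'a \<Rightarrow> 'a set" where "upair p = {fst p, snd p}"
lemma upair_conv[simp]: "upair (a, b) = {a, b}" by (simp add: upair_def)

abbreviation "pst st \<equiv> (\<lambda>(a,b) (c,d). (st a c \<and> b = d) \<or> (a = c \<and> st b d))"
abbreviation "prk r \<equiv> (\<lambda>(x,y). r x + r y)"

lemma GC_chain:
  assumes q: "qscd S f st r N C" and c: "c1 \<in> C" "c2 \<in> C" and k: "k < min (length c1) (length c2)"
  shows "GC c1 c2 k \<noteq> [] \<and> set (GC c1 c2 k) \<subseteq> S \<times> S \<and> chn (pst st) (prk r) (GC c1 c2 k) \<and>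
     prk r (hd (GC c1 c2 k)) + prk r (last (GC c1 c2 k)) = 2 * N"
  unfolding GC_def
  by (rule mapped_chain[OF q c, where kk = k])
     (use k gpt_range gpt_sum gpt_step in \<open>auto simp: glen_def\<close>)

lemma TC_chain:
  assumes q: "qscd S f st r N C" and c: "c \<in> C" and k: "2 * k < length c"
  shows "TC c k \<noteq> [] \<and> set (TC c k) \<subseteq> S \<times> S \<and> chn (pst st) (prk r) (TC c k) \<and>
     prk r (hd (TC c k)) + prk r (last (TC c k)) = 2 * N"
  unfolding TC_def
  by (rule mapped_chain[OF q c c, where kk = "2 * k"])
     (use k tpt_range tpt_sum tpt_step in \<open>auto simp: tlen_def\<close>)


lemma GC_mem: "y \<in> set (GC c1 c2 k) \<longleftrightarrow> (\<exists>m < glen (length c1) (length c2) k.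
    y = (c1 ! fst (gpt (length c2) k m), c2 ! snd (gpt (length c2) k m)))"
  unfolding GC_def by auto

lemma TC_mem: "y \<in> set (TC c k) \<longleftrightarrow> (\<exists>m < tlen (length c) k.
    y = (c ! fst (tpt (length c) k m), c ! snd (tpt (length c) k m)))"
  unfolding TC_def by auto

lemma qscd_symsq:
  assumes q: "qscd S id st r N C" and fin: "finite S"
  shows "\<exists>C2. qscd (S \<times> S) upair (pst st) (prk r) (2*N) C2"
proof -
  have nthS: "c ! i \<in> S" if "c \<in> C" "i < length c" for c i using qscd_nth_S[OF q that] .
  have uniq: "c = d" if "c \<in> C" "d \<in> C" "i < length c" "j < length d" "c ! i = d ! j" for c d i j
    using qscd_id_unique[OF q nthS[OF that(1,3)] that(1) _ that(2)] that by (metis nth_mem)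
  have cinj: "i = j" if "c \<in> C" "i < length c" "j < length c" "c ! i = c ! j" for c i j
    using chn_inj[OF qscd_chains(3)[OF q that(1)] that(2-4)] .
  have "inj_on hd C"
  proof
    fix c d assume cd: "c \<in> C" "d \<in> C" "hd c = hd d"
    have "c \<noteq> []" "d \<noteq> []" using qscd_chains(1)[OF q] cd by auto
    thus "c = d" using uniq[OF cd(1,2), of 0 0] cd by (simp add: hd_conv_nth)
  qed
  moreover have "hd ` C \<subseteq> S" using qscd_chains(1,2)[OF q] by fastforce
  ultimately have finC: "finite C" using fin by (metis finite_imageD finite_subset)
  then obtain h :: "'a list \<Rightarrow> nat" where "bij_betw h C {0..<card C}" using ex_bij_betw_finite_nat by blast
  hence hinj: "inj_on h C" by (rule bij_betw_imp_inj_on)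
  define C2 where "C2 = {GC c1 c2 k | c1 c2 k. c1 \<in> C \<and> c2 \<in> C \<and> h c1 < h c2 \<and> k < min (length c1) (length c2)}
      \<union> {TC c k | c k. c \<in> C \<and> 2 * k < length c}"
  have part1: "\<forall>g\<in>C2. g \<noteq> [] \<and> set g \<subseteq> S \<times> S \<and> chn (pst st) (prk r) g \<and> prk r (hd g) + prk r (last g) = 2 * N"
  proof
    fix g assume "g \<in> C2"
    then consider (G) d1 d2 k where "g = GC d1 d2 k" "d1 \<in> C" "d2 \<in> C" "k < min (length d1) (length d2)"
        | (T) d k where "g = TC d k" "d \<in> C" "2 * k < length d"
      unfolding C2_def by blast
    thus "g \<noteq> [] \<and> set g \<subseteq> S \<times> S \<and> chn (pst st) (prk r) g \<and> prk r (hd g) + prk r (last g) = 2 * N"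
    proof cases
      case G thus ?thesis using GC_chain[OF q G(2,3,4)] by simp
    next
      case T thus ?thesis using TC_chain[OF q T(2,3)] by simp
    qed
  qed
  have part2: "\<exists>!g. g \<in> C2 \<and> (\<exists>y\<in>set g. upair y = upair x)" if x: "x \<in> S \<times> S" for x
  proof -
    obtain x1 x2 where xx: "x = (x1, x2)" "x1 \<in> S" "x2 \<in> S" using x by auto
    have ex: "\<exists>c i. c \<in> C \<and> i < length c \<and> c ! i = z" if "z \<in> S" for z
    proof -
      have "\<exists>!c. c \<in> C \<and> (\<exists>y\<in>set c. id y = id z)" using q that unfolding qscd_def by blast
      then obtain c where "c \<in> C" "z \<in> set c" by auto
      thus ?thesis by (metis in_set_conv_nth)
    qed
    obtain c1 a where c1: "c1 \<in> C" "a < length c1" "c1 ! a = x1" using ex[OF xx(2)] by blast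
    obtain c2 b where c2: "c2 \<in> C" "b < length c2" "c2 ! b = x2" using ex[OF xx(3)] by blast
    define W where "W = (if c1 = c2 then TC c1 (min (min a b) (length c1 - 1 - max a b))
       else if h c1 < h c2 then GC c1 c2 (min a (length c2 - 1 - b)) else GC c2 c1 (min b (length c1 - 1 - a)))"
    have Wok: "W \<in> C2 \<and> (\<exists>y\<in>set W. upair y = upair x)"
    proof (cases "c1 = c2")
      case True
      have "max a b < length c1" using c1 c2 True by simp
      hence cov: "2 * min (min a b) (length c1 - 1 - max a b) < length c1 \<and> (\<exists>m < tlen (length c1) (min (min a b) (length c1 - 1 - max a b)). tpt (length c1) (min (min a b) (length c1 - 1 - max a b)) m = (min a b, max a b))"
        using tpt_cover[of "min a b" "max a b" "length c1"] by simp
      obtain m where m: "2 * min (min a b) (length c1 - 1 - max a b) < length c1"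
        "m < tlen (length c1) (min (min a b) (length c1 - 1 - max a b))"
        "tpt (length c1) (min (min a b) (length c1 - 1 - max a b)) m = (min a b, max a b)"
        using cov by blast
      have "(c1 ! min a b, c1 ! max a b) \<in> set W" unfolding W_def using True m by (auto simp: TC_mem)
      moreover have "{c1 ! min a b, c1 ! max a b} = {x1, x2}" using c1 c2 True
        by (cases "a \<le> b") (auto simp: min_def max_def)
      moreover have "W \<in> C2" unfolding W_def C2_def using True c1 m(1) by auto
      ultimately show ?thesis using xx(1) by (intro conjI bexI[of _ "(c1 ! min a b, c1 ! max a b)"]) simp_all
    next
      case False
      hence hne: "h c1 \<noteq> h c2" using hinj c1 c2 by (meson inj_on_eq_iff)
      show ?thesis
      proof (cases "h c1 < h c2")
        case True
        obtain m where m: "m < glen (length c1) (length c2) (min a (length c2 - 1 - b))"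
          "gpt (length c2) (min a (length c2 - 1 - b)) m = (a, b)"
          using gpt_cover[of a "length c1" b "length c2"] c1 c2 by auto
        have xin: "(x1, x2) \<in> set W" unfolding W_def using False True m c1 c2 by (auto simp: GC_mem)
        have kk: "min a (length c2 - 1 - b) < min (length c1) (length c2)" using c1 c2 by auto
        have WW: "W = GC c1 c2 (min a (length c2 - 1 - b))" unfolding W_def using False True by simp
        have "W \<in> C2" unfolding C2_def WW using kk True c1 c2 by blast
        with xin show ?thesis using xx(1) by (intro conjI bexI[of _ "(x1, x2)"]) simp_all
      next
        case Tn: False
        hence T2: "h c2 < h c1" using hne by simp
        obtain m where m: "m < glen (length c2) (length c1) (min b (length c1 - 1 - a))"
          "gpt (length c1) (min b (length c1 - 1 - a)) m = (b, a)"
          using gpt_cover[of b "length c2" a "length c1"] c1 c2 by auto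
        have xin: "(x2, x1) \<in> set W" unfolding W_def using False Tn m c1 c2 by (auto simp: GC_mem)
        have kk: "min b (length c1 - 1 - a) < min (length c2) (length c1)" using c1 c2 by auto
        have WW: "W = GC c2 c1 (min b (length c1 - 1 - a))" unfolding W_def using False Tn by simp
        have "W \<in> C2" unfolding C2_def WW using kk T2 c1 c2 by blast
        with xin show ?thesis using xx(1) by (intro conjI bexI[of _ "(x2, x1)"]) (simp_all add: insert_commute)
      qed
    qed
    show ?thesis
    proof (rule ex1I[of _ W])
      show "W \<in> C2 \<and> (\<exists>y\<in>set W. upair y = upair x)" using Wok .
    next
      fix g assume g: "g \<in> C2 \<and> (\<exists>y\<in>set g. upair y = upair x)"
      then obtain y where y: "y \<in> set g" "upair y = {x1, x2}" using xx(1) by auto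
      from g consider (G) d1 d2 k where "g = GC d1 d2 k" "d1 \<in> C" "d2 \<in> C" "h d1 < h d2" "k < min (length d1) (length d2)"
        | (T) d k where "g = TC d k" "d \<in> C" "2 * k < length d"
        unfolding C2_def by blast
      then show "g = W"
      proof cases
        case G
        then obtain m where m: "m < glen (length d1) (length d2) k"
          "y = (d1 ! fst (gpt (length d2) k m), d2 ! snd (gpt (length d2) k m))"
          using y(1) by (auto simp: GC_mem)
        obtain i j where ij: "gpt (length d2) k m = (i, j)" by (cases "gpt (length d2) k m")
        have rg: "i < length d1" "j < length d2" using gpt_range[OF m(1) G(5)] ij by auto
        have kk: "k = min i (length d2 - 1 - j)" using gpt_k[OF m(1) G(5) ij] .
        have "{d1 ! i, d2 ! j} = {c1 ! a, c2 ! b}" using y(2) m(2) ij c1 c2 by simp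
        hence "(d1 ! i = c1 ! a \<and> d2 ! j = c2 ! b) \<or> (d1 ! i = c2 ! b \<and> d2 ! j = c1 ! a)"
          by (simp add: doubleton_eq_iff)
        thus ?thesis
        proof
          assume e: "d1 ! i = c1 ! a \<and> d2 ! j = c2 ! b"
          have "d1 = c1" using uniq[OF G(2) c1(1) rg(1) c1(2)] e by simp
          moreover have "d2 = c2" using uniq[OF G(3) c2(1) rg(2) c2(2)] e by simp
          moreover have "i = a" using cinj[OF c1(1), of i a] rg c1 e \<open>d1 = c1\<close> by simp
          moreover have "j = b" using cinj[OF c2(1), of j b] rg c2 e \<open>d2 = c2\<close> by simp
          moreover have "c1 \<noteq> c2" "h c1 < h c2" using G(4) \<open>d1 = c1\<close> \<open>d2 = c2\<close> by auto
          moreover hence "W = GC c1 c2 (min a (length c2 - 1 - b))" unfolding W_def by simp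
          ultimately show ?thesis using G(1) kk by simp
        next
          assume e: "d1 ! i = c2 ! b \<and> d2 ! j = c1 ! a"
          have "d1 = c2" using uniq[OF G(2) c2(1) rg(1) c2(2)] e by simp
          moreover have "d2 = c1" using uniq[OF G(3) c1(1) rg(2) c1(2)] e by simp
          moreover have "i = b" using cinj[OF c2(1), of i b] rg c2 e \<open>d1 = c2\<close> by simp
          moreover have "j = a" using cinj[OF c1(1), of j a] rg c1 e \<open>d2 = c1\<close> by simp
          moreover have "c1 \<noteq> c2" "\<not> h c1 < h c2" using G(4) \<open>d1 = c2\<close> \<open>d2 = c1\<close> by auto
          moreover hence "W = GC c2 c1 (min b (length c1 - 1 - a))" unfolding W_def by simp
          ultimately show ?thesis using G(1) kk by simp
        qed
      next
        case T
        then obtain m where m: "m < tlen (length d) k"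
          "y = (d ! fst (tpt (length d) k m), d ! snd (tpt (length d) k m))"
          using y(1) by (auto simp: TC_mem)
        obtain i j where ij: "tpt (length d) k m = (i, j)" by (cases "tpt (length d) k m")
        have rg: "i \<le> j" "j < length d" "i < length d" using tpt_range[OF m(1) T(3)] ij by auto
        have kk: "k = min i (length d - 1 - j)" using tpt_k[OF m(1) T(3) ij] .
        have "{d ! i, d ! j} = {c1 ! a, c2 ! b}" using y(2) m(2) ij c1 c2 by simp
        hence "(d ! i = c1 ! a \<and> d ! j = c2 ! b) \<or> (d ! i = c2 ! b \<and> d ! j = c1 ! a)"
          by (simp add: doubleton_eq_iff)
        thus ?thesis
        proof
          assume e: "d ! i = c1 ! a \<and> d ! j = c2 ! b"
          have "d = c1" using uniq[OF T(2) c1(1) rg(3) c1(2)] e by simp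
          moreover have "d = c2" using uniq[OF T(2) c2(1) rg(2) c2(2)] e by simp
          moreover have "i = a" using cinj[OF c1(1), of i a] rg c1 e \<open>d = c1\<close> by simp
          moreover have "j = b" using cinj[OF c2(1), of j b] rg c2 e \<open>d = c2\<close> by simp
          moreover have "W = TC c1 (min (min a b) (length c1 - 1 - max a b))" unfolding W_def
            using \<open>d = c1\<close> \<open>d = c2\<close> by simp
          moreover have "min a b = i" "max a b = j" using rg \<open>i = a\<close> \<open>j = b\<close> by auto
          ultimately show ?thesis using T(1) kk by simp
        next
          assume e: "d ! i = c2 ! b \<and> d ! j = c1 ! a"
          have "d = c2" using uniq[OF T(2) c2(1) rg(3) c2(2)] e by simp
          moreover have "d = c1" using uniq[OF T(2) c1(1) rg(2) c1(2)] e by simp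
          moreover have "i = b" using cinj[OF c2(1), of i b] rg c2 e \<open>d = c2\<close> by simp
          moreover have "j = a" using cinj[OF c1(1), of j a] rg c1 e \<open>d = c1\<close> by simp
          moreover have "W = TC c1 (min (min a b) (length c1 - 1 - max a b))" unfolding W_def
            using \<open>d = c1\<close> \<open>d = c2\<close> by simp
          moreover have "min a b = i" "max a b = j" using rg \<open>i = b\<close> \<open>j = a\<close> by auto
          ultimately show ?thesis using T(1) kk by simp
        qed
      qed
    qed
  qed
  have "qscd (S \<times> S) upair (pst st) (prk r) (2*N) C2"
    unfolding qscd_def
  proof (intro conjI)
    show "\<forall>x\<in>S \<times> S. \<exists>!c. c \<in> C2 \<and> (\<exists>y\<in>set c. upair y = upair x)" using part2 by blast
  qed (rule part1)
  thus ?thesis by blast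
qed




definition orb :: "(nat \<Rightarrow> nat) \<Rightarrow> nat set \<Rightarrow> nat set set" where
  "orb \<rho> A = {A, \<rho> ` A}"

lemma chn_snoc:
  assumes "chn st r c" "c \<noteq> []" "st (last c) z" "r z = Suc (r (last c))"
  shows "chn st r (c @ [z])"
  unfolding chn_def
proof (intro allI impI)
  fix i assume i: "Suc i < length (c @ [z])"
  show "st ((c @ [z]) ! i) ((c @ [z]) ! Suc i) \<and> r ((c @ [z]) ! Suc i) = Suc (r ((c @ [z]) ! i))"
  proof (cases "Suc i < length c")
    case True thus ?thesis using assms(1) unfolding chn_def by (simp add: nth_append)
  next
    case False
    hence "Suc i = length c" using i by simp
    hence ii: "i = length c - 1" by simp
    hence "(c @ [z]) ! i = last c" "(c @ [z]) ! Suc i = z" using assms(2) \<open>Suc i = length c\<close>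
      by (auto simp: nth_append last_conv_nth)
    thus ?thesis using assms(3,4) by simp
  qed
qed

lemma chn_butlast: "chn st r c \<Longrightarrow> chn st r (butlast c)"
  unfolding chn_def by (simp add: nth_butlast)

lemma chn_map:
  assumes "chn st r c" "\<And>u v. u \<in> set c \<Longrightarrow> v \<in> set c \<Longrightarrow> st u v \<Longrightarrow> st' (g u) (g v)"
    "\<And>u. u \<in> set c \<Longrightarrow> r' (g u) = Suc (r u)"
  shows "chn st' r' (map g c)"
  unfolding chn_def
proof (intro allI impI)
  fix i assume i: "Suc i < length (map g c)"
  hence m: "c ! i \<in> set c" "c ! Suc i \<in> set c" by auto
  have "st (c!i) (c!Suc i) \<and> r (c!Suc i) = Suc (r (c!i))" using assms(1) i unfolding chn_def by simp
  thus "st' (map g c ! i) (map g c ! Suc i) \<and> r' (map g c ! Suc i) = Suc (r' (map g c ! i))"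
    using assms(2)[OF m] assms(3)[OF m(1)] assms(3)[OF m(2)] i by simp
qed

lemma chn_same_rank:
  assumes "chn st r c" "u \<in> set c" "v \<in> set c" "r u = r v" shows "u = v"
proof -
  obtain i j where "i < length c" "j < length c" "u = c!i" "v = c!j" using assms(2,3) by (metis in_set_conv_nth)
  thus ?thesis using chn_rank[OF assms(1), of i] chn_rank[OF assms(1), of j] assms(4) by simp
qed

lemma chn_butlast_less:
  assumes "chn st r c" "z \<in> set (butlast c)" shows "r z < r (last c)"
proof -
  have ne: "c \<noteq> []" using assms(2) by auto
  obtain i where i: "i < length (butlast c)" "z = butlast c ! i" using assms(2) by (metis in_set_conv_nth)
  have "z = c ! i" using i by (simp add: nth_butlast)
  moreover have "last c = c ! (length c - 1)" using ne by (simp add: last_conv_nth)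
  ultimately show ?thesis using chn_rank[OF assms(1), of i] chn_rank[OF assms(1), of "length c - 1"] i ne by simp
qed

lemma qscd_base: "qscd (Pow {}) (orb \<rho>) (\<subseteq>) card 0 {[{}]}"
  unfolding qscd_def chn_def by auto

lemma qscd_add:
  assumes q: "qscd (Pow T) (orb \<rho>) (\<subseteq>) card N C" and fin: "finite T" and cl: "\<rho> ` T \<subseteq> T"
    and inv: "\<forall>y\<in>T. \<rho> (\<rho> y) = y" and x: "x \<notin> T" "\<rho> x = x"
  shows "\<exists>C'. qscd (Pow (insert x T)) (orb \<rho>) (\<subseteq>) card (Suc N) C'"
proof -
  define D where "D = insert x T"
  have invD: "\<rho> (\<rho> y) = y" if "y \<in> D" for y using inv x that unfolding D_def by auto
  have clD: "\<rho> ` D \<subseteq> D" using cl x unfolding D_def by auto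
  have rr: "\<rho> ` (\<rho> ` A) = A" if "A \<subseteq> D" for A
  proof -
    have "\<rho> ` (\<rho> ` A) = (\<lambda>y. \<rho> (\<rho> y)) ` A" by (simp add: image_image)
    also have "\<dots> = A" using invD that by (auto simp: subset_iff image_iff)
    finally show ?thesis .
  qed
  have injD: "inj_on \<rho> D" by (metis inj_on_def invD)
  have orb_eq: "orb \<rho> A = orb \<rho> B \<longleftrightarrow> B = A \<or> B = \<rho> ` A" if "A \<subseteq> D" "B \<subseteq> D" for A B
  proof
    assume "orb \<rho> A = orb \<rho> B"
    moreover have "B \<in> orb \<rho> B" unfolding orb_def by simp
    ultimately show "B = A \<or> B = \<rho> ` A" unfolding orb_def by auto
  next
    assume "B = A \<or> B = \<rho> ` A"
    thus "orb \<rho> A = orb \<rho> B" using rr[OF that(1)] unfolding orb_def by auto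
  qed
  have finD: "finite D" using fin unfolding D_def by simp
  have xmem: "x \<in> \<rho> ` A \<longleftrightarrow> x \<in> A" if "A \<subseteq> D" for A
  proof
    assume "x \<in> \<rho> ` A" then obtain y where "y \<in> A" "\<rho> y = x" by auto
    thus "x \<in> A" using invD[of y] that x(2) by auto
  qed (use x(2) in force)
  have rT: "\<rho> ` A \<subseteq> T" if "A \<subseteq> T" for A using cl that by auto
  have rins: "\<rho> ` (insert x A) = insert x (\<rho> ` A)" for A using x(2) by simp
  have cardT: "card (insert x A) = Suc (card A)" if "A \<subseteq> T" for A
    using that x(1) fin by (meson card_insert_disjoint finite_subset subsetD)
  have oins: "orb \<rho> (insert x z) = orb \<rho> (insert x A0) \<longleftrightarrow> orb \<rho> z = orb \<rho> A0" if "z \<subseteq> T" "A0 \<subseteq> T" for z A0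
  proof -
    have zD: "z \<subseteq> D" "A0 \<subseteq> D" "insert x z \<subseteq> D" "insert x A0 \<subseteq> D" using that unfolding D_def by auto
    have "x \<notin> z" "x \<notin> A0" "x \<notin> \<rho> ` A0" using that x(1) rT[OF that(2)] by auto
    hence "insert x z = insert x A0 \<longleftrightarrow> z = A0" "insert x z = insert x (\<rho> ` A0) \<longleftrightarrow> z = \<rho> ` A0"
      by (metis insert_ident)+
    moreover have "orb \<rho> (insert x A0) = orb \<rho> (insert x z) \<longleftrightarrow> insert x z = insert x A0 \<or> insert x z = insert x (\<rho> ` A0)"
      using orb_eq[OF zD(4,3)] rins by simp
    moreover have "orb \<rho> A0 = orb \<rho> z \<longleftrightarrow> z = A0 \<or> z = \<rho> ` A0" using orb_eq[OF zD(2,1)] by simp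
    ultimately show ?thesis by metis
  qed
  have cC: "c \<noteq> [] \<and> set c \<subseteq> Pow T \<and> chn (\<subseteq>) card c \<and> card (hd c) + card (last c) = N" if "c \<in> C" for c
    using q that unfolding qscd_def by blast
  have quniq: "\<exists>!c. c \<in> C \<and> (\<exists>y\<in>set c. orb \<rho> y = orb \<rho> A)" if "A \<subseteq> T" for A
    using q that unfolding qscd_def by blast
  define E1 where "E1 c = c @ [insert x (last c)]" for c :: "nat set list"
  define E2 where "E2 c = map (insert x) (butlast c)" for c :: "nat set list"
  define C' where "C' = E1 ` C \<union> E2 ` {c \<in> C. 2 \<le> length c}"
  have part1: "g \<noteq> [] \<and> set g \<subseteq> Pow D \<and> chn (\<subseteq>) card g \<and> card (hd g) + card (last g) = Suc N"
    if "g \<in> C'" for g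
  proof -
    from that consider (A) c where "c \<in> C" "g = E1 c" | (B) c where "c \<in> C" "2 \<le> length c" "g = E2 c"
      unfolding C'_def by blast
    thus ?thesis
    proof cases
      case A
      note cc = cC[OF A(1)]
      have "last c \<in> set c" using cc by simp
      hence lT: "last c \<subseteq> T" using cc by blast
      have "chn (\<subseteq>) card g" unfolding A(2) E1_def
        by (rule chn_snoc) (use cc cardT[OF lT] in auto)
      moreover have "set g \<subseteq> Pow D" using cc lT unfolding A(2) E1_def D_def by auto
      moreover have "card (hd g) + card (last g) = Suc N" using cc cardT[OF lT] unfolding A(2) E1_def by simp
      ultimately show ?thesis unfolding A(2) E1_def by simp
    next
      case B
      note cc = cC[OF B(1)]
      have bT: "set (butlast c) \<subseteq> Pow T" using cc by (meson in_set_butlastD subset_iff)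
      have bne: "butlast c \<noteq> []" using B(2) by (cases c) auto
      have cb: "chn (\<subseteq>) card (butlast c)" using chn_butlast cc by blast
      have "chn (\<subseteq>) card (map (insert x) (butlast c))"
      proof (rule chn_map[OF cb])
        fix u assume "u \<in> set (butlast c)"
        thus "card (insert x u) = Suc (card u)" using bT cardT by blast
      qed auto
      hence "chn (\<subseteq>) card g" unfolding B(3) E2_def .
      moreover have "set g \<subseteq> Pow D" using bT unfolding B(3) E2_def D_def by auto
      moreover have "card (hd g) + card (last g) = Suc N"
      proof -
        have h1: "hd (butlast c) = hd c" using bne by (cases c) auto
        have e1: "last c = c ! (length c - 1)" using cc by (simp add: last_conv_nth)
        have e2: "last (butlast c) = c ! (length c - 2)" using bne B(2)
          by (simp add: last_conv_nth nth_butlast numeral_2_eq_2)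
        have r1: "card (c ! (length c - 1)) = card (c!0) + (length c - 1)"
          using chn_rank[of "(\<subseteq>)" card c "length c - 1"] cc B(2) by linarith
        have r2: "card (c ! (length c - 2)) = card (c!0) + (length c - 2)"
          using chn_rank[of "(\<subseteq>)" card c "length c - 2"] cc B(2) by linarith
        have "card (last c) = Suc (card (last (butlast c)))"
          unfolding e1 e2 r1 r2 using B(2) by linarith
        moreover have "hd (butlast c) \<in> set (butlast c)" "last (butlast c) \<in> set (butlast c)" using bne by auto
        hence "hd (butlast c) \<subseteq> T" "last (butlast c) \<subseteq> T" using bT by blast+
        ultimately show ?thesis unfolding B(3) E2_def using bne h1 cc cardT
          by (simp add: hd_map last_map)
      qed
      ultimately show ?thesis unfolding B(3) E2_def using bne by simp
    qed
  qed
  have part2: "\<exists>!g. g \<in> C' \<and> (\<exists>y\<in>set g. orb \<rho> y = orb \<rho> A)" if A: "A \<subseteq> D" for A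
  proof (cases "x \<in> A")
    case False
    hence AT: "A \<subseteq> T" using A unfolding D_def by auto
    obtain c where c: "c \<in> C" "\<exists>y\<in>set c. orb \<rho> y = orb \<rho> A"
      and u: "\<And>d. d \<in> C \<Longrightarrow> (\<exists>y\<in>set d. orb \<rho> y = orb \<rho> A) \<Longrightarrow> d = c"
      using quniq[OF AT] by blast
    show ?thesis
    proof (rule ex1I[of _ "E1 c"])
      show "E1 c \<in> C' \<and> (\<exists>y\<in>set (E1 c). orb \<rho> y = orb \<rho> A)" using c unfolding C'_def E1_def by auto
    next
      fix g assume g: "g \<in> C' \<and> (\<exists>y\<in>set g. orb \<rho> y = orb \<rho> A)"
      then obtain y where y: "y \<in> set g" "orb \<rho> y = orb \<rho> A" by blast
      have "set g \<subseteq> Pow D" using part1 g by blast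
      hence yD: "y \<subseteq> D" using y(1) by auto
      have "y = A \<or> y = \<rho> ` A" using orb_eq[OF A yD] y(2) by simp
      hence xy: "x \<notin> y" using False xmem[OF A] by auto
      from g consider (A) c0 where "c0 \<in> C" "g = E1 c0" | (B) c0 where "c0 \<in> C" "2 \<le> length c0" "g = E2 c0"
        unfolding C'_def by blast
      thus "g = E1 c"
      proof cases
        case A
        hence "y \<in> set c0" using y(1) xy unfolding E1_def by auto
        thus ?thesis using u[OF A(1)] y(2) A(2) by blast
      next
        case B
        thus ?thesis using y(1) xy unfolding E2_def by auto
      qed
    qed
  next
    case True
    define A0 where "A0 = A - {x}"
    have A0T: "A0 \<subseteq> T" using A unfolding A0_def D_def by auto
    have AA: "A = insert x A0" using True unfolding A0_def by auto
    obtain c y where c: "c \<in> C" "y \<in> set c" "orb \<rho> y = orb \<rho> A0"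
      and u: "\<And>d. d \<in> C \<Longrightarrow> (\<exists>y\<in>set d. orb \<rho> y = orb \<rho> A0) \<Longrightarrow> d = c"
      using quniq[OF A0T] by blast
    note cc = cC[OF c(1)]
    have yT: "y \<subseteq> T" using cc c(2) by auto
    define W where "W = (if y = last c then E1 c else E2 c)"
    have eqA: "orb \<rho> (insert x z) = orb \<rho> A \<longleftrightarrow> orb \<rho> z = orb \<rho> A0" if "z \<subseteq> T" for z
      using oins[OF that A0T] AA by simp
    have Wok: "W \<in> C' \<and> (\<exists>y\<in>set W. orb \<rho> y = orb \<rho> A)"
    proof (cases "y = last c")
      case True
      have "insert x y \<in> set (E1 c)" using True unfolding E1_def by simp
      moreover have "orb \<rho> (insert x y) = orb \<rho> A" using eqA[OF yT] c(3) by simp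
      ultimately show ?thesis using c(1) True unfolding W_def C'_def by auto
    next
      case False
      have yb: "y \<in> set (butlast c)" using c(2) False cc by (metis append_butlast_last_id in_set_conv_decomp last_snoc butlast_snoc append_Cons append_Nil in_set_butlast_appendI rotate1.simps(2) set_rotate1 Un_iff empty_iff list.set(1) list.set(2) insert_iff)
      hence "2 \<le> length c" by (cases c rule: rev_cases) (auto simp: Suc_le_eq)
      moreover have "insert x y \<in> set (E2 c)" using yb unfolding E2_def by simp
      moreover have "orb \<rho> (insert x y) = orb \<rho> A" using eqA[OF yT] c(3) by simp
      ultimately show ?thesis using c(1) False unfolding W_def C'_def by auto
    qed
    show ?thesis
    proof (rule ex1I[of _ W])
      show "W \<in> C' \<and> (\<exists>y\<in>set W. orb \<rho> y = orb \<rho> A)" using Wok .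
    next
      fix g assume g: "g \<in> C' \<and> (\<exists>y\<in>set g. orb \<rho> y = orb \<rho> A)"
      then obtain y' where y': "y' \<in> set g" "orb \<rho> y' = orb \<rho> A" by blast
      have "set g \<subseteq> Pow D" using part1 g by blast
      hence yD: "y' \<subseteq> D" using y'(1) by auto
      have "y' = A \<or> y' = \<rho> ` A" using orb_eq[OF A yD] y'(2) by simp
      hence xy: "x \<in> y'" using True xmem[OF A] by auto
      have crd: "card z = card y" if "z \<in> set c" "orb \<rho> z = orb \<rho> A0" for z
      proof -
        have zT: "z \<subseteq> T" "y \<subseteq> T" using that(1) cc yT by auto
        hence "z = y \<or> z = \<rho> ` y" using orb_eq[of y z] c(3) that(2) unfolding D_def by auto
        moreover have "inj_on \<rho> y" using injD zT unfolding D_def by (meson inj_on_subset subset_insertI2)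
        ultimately show ?thesis by (auto simp: card_image)
      qed
      from g consider (A) c0 where "c0 \<in> C" "g = E1 c0" | (B) c0 where "c0 \<in> C" "2 \<le> length c0" "g = E2 c0"
        unfolding C'_def by blast
      thus "g = W"
      proof cases
        case A
        have "y' \<notin> set c0" using xy cC[OF A(1)] x(1) by auto
        hence y'e: "y' = insert x (last c0)" using y'(1) A(2) unfolding E1_def by auto
        have l0a: "last c0 \<in> set c0" using cC[OF A(1)] by simp
        hence l0: "last c0 \<in> set c0" "last c0 \<subseteq> T" using cC[OF A(1)] by blast+
        have "orb \<rho> (last c0) = orb \<rho> A0" using eqA[OF l0(2)] y'(2) y'e by simp
        hence "c0 = c" using u[OF A(1)] l0(1) by blast
        hence "y = last c" using chn_same_rank[OF _ c(2), of "(\<subseteq>)" card "last c"] cc crd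
          \<open>orb \<rho> (last c0) = orb \<rho> A0\<close> l0(1) by auto
        thus ?thesis unfolding W_def using A(2) \<open>c0 = c\<close> by simp
      next
        case B
        obtain z where z: "z \<in> set (butlast c0)" "y' = insert x z" using y'(1) B(3) unfolding E2_def by auto
        have zc: "z \<in> set c0" using z(1) by (meson in_set_butlastD)
        hence zT: "z \<subseteq> T" using cC[OF B(1)] by auto
        have "orb \<rho> z = orb \<rho> A0" using eqA[OF zT] y'(2) z(2) by simp
        hence "c0 = c" using u[OF B(1)] zc by blast
        have "z = y" using chn_same_rank[OF _ zc c(2)[folded \<open>c0 = c\<close>], of "(\<subseteq>)" card] cc crd
          \<open>orb \<rho> z = orb \<rho> A0\<close> zc \<open>c0 = c\<close> by auto
        have "y \<noteq> last c" using chn_butlast_less[of "(\<subseteq>)" card c z] z(1) cc \<open>c0 = c\<close> \<open>z = y\<close> by auto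
        thus ?thesis unfolding W_def using B(3) \<open>c0 = c\<close> by simp
      qed
    qed
  qed
  have "qscd (Pow D) (orb \<rho>) (\<subseteq>) card (Suc N) C'"
    unfolding qscd_def
  proof (intro conjI)
    show "\<forall>A\<in>Pow D. \<exists>!c. c \<in> C' \<and> (\<exists>y\<in>set c. orb \<rho> y = orb \<rho> A)" using part2 by blast
  qed (use part1 in blast)
  thus ?thesis unfolding D_def by blast
qed




locale invo =
  fixes n :: nat and \<rho> :: "nat \<Rightarrow> nat"
  assumes perm: "\<rho> permutes {1..n}" and inv: "\<rho> \<circ> \<rho> = id"
begin

abbreviation "P \<equiv> Bn_quot n {id, \<rho>}"
abbreviation "le \<equiv> Bn_quot_le"

lemma rr[simp]: "\<rho> (\<rho> i) = i" using fun_cong[OF inv, of i] by simp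

lemma rimg[simp]: "\<rho> ` (\<rho> ` A) = A" by (simp add: image_image)

lemma rinj: "inj \<rho>" by (metis injI rr)

lemma rcard[simp]: "card (\<rho> ` A) = card A" using rinj by (simp add: card_image inj_on_subset)

lemma rsub: "A \<subseteq> {1..n} \<Longrightarrow> \<rho> ` A \<subseteq> {1..n}" using permutes_in_image[OF perm] by auto

lemma orbit_orb: "orbit_set {id, \<rho>} A = orb \<rho> A" unfolding orbit_set_def orb_def by auto

lemma P_eq: "P = orb \<rho> ` Pow {1..n}" unfolding Bn_quot_def orbit_orb by auto

lemma orb_sym: "orb \<rho> (\<rho> ` A) = orb \<rho> A" unfolding orb_def by auto

lemma memP: assumes "X \<in> P" "A \<in> X" shows "A \<subseteq> {1..n}" "X = orb \<rho> A"
proof -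
  obtain B where B: "B \<subseteq> {1..n}" "X = orb \<rho> B" using assms(1) P_eq by auto
  hence "A = B \<or> A = \<rho> ` B" using assms(2) unfolding orb_def by auto
  thus "A \<subseteq> {1..n}" "X = orb \<rho> A" using B rsub orb_sym by auto
qed

lemma orbP: "A \<subseteq> {1..n} \<Longrightarrow> orb \<rho> A \<in> P" using P_eq by auto

lemma le_orb: "le (orb \<rho> A) (orb \<rho> B) \<longleftrightarrow> A \<subseteq> B \<or> \<rho> ` A \<subseteq> B"
proof
  assume "le (orb \<rho> A) (orb \<rho> B)"
  then obtain A' B' where ab: "A' \<in> {A, \<rho> ` A}" "B' \<in> {B, \<rho> ` B}" "A' \<subseteq> B'"
    unfolding Bn_quot_le_def orb_def by auto
  show "A \<subseteq> B \<or> \<rho> ` A \<subseteq> B"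
  proof (cases "B' = B")
    case True thus ?thesis using ab by auto
  next
    case False
    hence "B' = \<rho> ` B" using ab by auto
    hence "\<rho> ` A' \<subseteq> B" using ab(3) by (metis image_mono rimg)
    thus ?thesis using ab(1) by auto
  qed
next
  assume "A \<subseteq> B \<or> \<rho> ` A \<subseteq> B"
  thus "le (orb \<rho> A) (orb \<rho> B)" unfolding Bn_quot_le_def orb_def by auto
qed

definition ocard :: "nat set set \<Rightarrow> nat" where "ocard X = card (SOME A. A \<in> X)"

lemma ocard_orb[simp]: "ocard (orb \<rho> A) = card A"
proof -
  have "(SOME B. B \<in> orb \<rho> A) \<in> orb \<rho> A" by (rule someI[of _ A]) (simp add: orb_def)
  thus ?thesis unfolding ocard_def orb_def by auto
qed

lemma fin_sub: "A \<subseteq> {1..n} \<Longrightarrow> finite A" using finite_subset by blast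

lemma le_card: assumes "le (orb \<rho> A) (orb \<rho> B)" "B \<subseteq> {1..n}" shows "card A \<le> card B"
  using assms le_orb fin_sub card_mono by (metis rcard)

lemma le_eq: assumes "le (orb \<rho> A) (orb \<rho> B)" "B \<subseteq> {1..n}" "card A = card B"
  shows "orb \<rho> A = orb \<rho> B"
proof -
  have fB: "finite B" using fin_sub assms(2) .
  from assms(1) have "A \<subseteq> B \<or> \<rho> ` A \<subseteq> B" using le_orb by simp
  thus ?thesis
  proof
    assume "A \<subseteq> B" thus ?thesis using card_subset_eq[OF fB] assms(3) by metis
  next
    assume "\<rho> ` A \<subseteq> B" hence "\<rho> ` A = B" using card_subset_eq[OF fB] assms(3) rcard by metis
    thus ?thesis using orb_sym by metis
  qed
qed

lemma poset: "poset_on P le"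
  unfolding poset_on_def
proof (intro conjI ballI impI)
  fix X assume "X \<in> P"
  then obtain A where "X = orb \<rho> A" using P_eq by auto
  thus "le X X" using le_orb by simp
next
  fix X Y assume XY: "X \<in> P" "Y \<in> P" "le X Y \<and> le Y X"
  obtain A B where A: "A \<subseteq> {1..n}" "X = orb \<rho> A" and B: "B \<subseteq> {1..n}" "Y = orb \<rho> B"
    using XY(1,2) P_eq by auto
  have "card A = card B" using le_card XY(3) A B by (meson le_antisym)
  thus "X = Y" using le_eq XY(3) A B by metis
next
  fix X Y Z assume XYZ: "X \<in> P" "Y \<in> P" "Z \<in> P" "le X Y \<and> le Y Z"
  obtain A B C where "X = orb \<rho> A" "Y = orb \<rho> B" "Z = orb \<rho> C"
    using XYZ(1-3) P_eq by auto
  hence h: "A \<subseteq> B \<or> \<rho> ` A \<subseteq> B" "B \<subseteq> C \<or> \<rho> ` B \<subseteq> C" using XYZ(4) le_orb by auto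
  have "A \<subseteq> C \<or> \<rho> ` A \<subseteq> C"
  proof (cases "B \<subseteq> C")
    case True thus ?thesis using h(1) by blast
  next
    case False
    hence "\<rho> ` B \<subseteq> C" using h(2) by blast
    moreover have "\<rho> ` A \<subseteq> \<rho> ` B \<or> A \<subseteq> \<rho> ` B" using h(1) by (metis image_mono rimg)
    ultimately show ?thesis by blast
  qed
  thus "le X Z" using le_orb \<open>X = orb \<rho> A\<close> \<open>Z = orb \<rho> C\<close> by simp
qed

lemma cov_intro:
  assumes "A \<subseteq> {1..n}" "B \<subseteq> {1..n}" "A \<subseteq> B" "card B = Suc (card A)"
  shows "covers P le (orb \<rho> A) (orb \<rho> B)"
  unfolding covers_def
proof (intro conjI)
  show "orb \<rho> A \<in> P" "orb \<rho> B \<in> P" using orbP assms by auto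
  show "le (orb \<rho> A) (orb \<rho> B)" using le_orb assms by simp
  show "orb \<rho> A \<noteq> orb \<rho> B" using assms(4) ocard_orb by (metis n_not_Suc_n)
  show "\<not> (\<exists>z\<in>P. le (orb \<rho> A) z \<and> orb \<rho> A \<noteq> z \<and> le z (orb \<rho> B) \<and> z \<noteq> orb \<rho> B)"
  proof
    assume "\<exists>z\<in>P. le (orb \<rho> A) z \<and> orb \<rho> A \<noteq> z \<and> le z (orb \<rho> B) \<and> z \<noteq> orb \<rho> B"
    then obtain z where z: "z \<in> P" "le (orb \<rho> A) z" "orb \<rho> A \<noteq> z" "le z (orb \<rho> B)" "z \<noteq> orb \<rho> B" by blast
    obtain C where C: "C \<subseteq> {1..n}" "z = orb \<rho> C" using z(1) P_eq by auto
    have c1: "card A \<le> card C" using le_card z(2) C by simp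
    have c2: "card C \<le> card B" using le_card z(4) C assms(2) by simp
    have "card A \<noteq> card C" using le_eq z(2,3) C by metis
    moreover have "card C \<noteq> card B" using le_eq z(4,5) C assms(2) by metis
    ultimately show False using c1 c2 assms(4) by linarith
  qed
qed

lemma cov_rank:
  assumes "covers P le X Y" shows "ocard Y = Suc (ocard X)"
proof -
  have XY: "X \<in> P" "Y \<in> P" "le X Y" "X \<noteq> Y"
    and nz: "\<not> (\<exists>z\<in>P. le X z \<and> X \<noteq> z \<and> le z Y \<and> z \<noteq> Y)"
    using assms unfolding covers_def by auto
  obtain A' B' where ab: "A' \<in> X" "B' \<in> Y" "A' \<subseteq> B'" using XY(3) unfolding Bn_quot_le_def by auto
  have sA: "A' \<subseteq> {1..n}" "X = orb \<rho> A'" using memP[OF XY(1) ab(1)] by auto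
  have sB: "B' \<subseteq> {1..n}" "Y = orb \<rho> B'" using memP[OF XY(2) ab(2)] by auto
  have fB: "finite B'" using fin_sub sB(1) .
  have ne: "A' \<noteq> B'" using XY(4) sA sB by auto
  hence lt: "card A' < card B'" using ab(3) fB by (meson psubsetI psubset_card_mono)
  have "card B' = Suc (card A')"
  proof (rule ccontr)
    assume "card B' \<noteq> Suc (card A')"
    hence lt2: "Suc (card A') < card B'" using lt by linarith
    obtain b where b: "b \<in> B'" "b \<notin> A'" using ab(3) ne by blast
    define Z where "Z = orb \<rho> (insert b A')"
    have cZ: "card (insert b A') = Suc (card A')" using b fin_sub sA(1) by simp
    have iZ: "insert b A' \<subseteq> {1..n}" using b sB(1) sA(1) by auto
    have "Z \<in> P" using orbP iZ unfolding Z_def by simp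
    moreover have "le X Z" unfolding Z_def sA(2) le_orb by auto
    moreover have "X \<noteq> Z" unfolding Z_def sA(2) using cZ by (metis ocard_orb n_not_Suc_n)
    moreover have "le Z Y" unfolding Z_def sB(2) le_orb using b ab(3) by auto
    moreover have "Z \<noteq> Y" unfolding Z_def sB(2) using cZ lt2 by (metis ocard_orb less_irrefl)
    ultimately show False using nz by blast
  qed
  thus ?thesis using sA sB by simp
qed

lemma emptyP: "orb \<rho> {} = {{}}" unfolding orb_def by simp

lemma is_min: "is_minimum P le (orb \<rho> {})"
  unfolding is_minimum_def
proof
  show "orb \<rho> {} \<in> P" using orbP by simp
  show "\<forall>x\<in>P. le (orb \<rho> {}) x"
  proof
    fix x assume "x \<in> P" then obtain A where "x = orb \<rho> A" using P_eq by auto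
    thus "le (orb \<rho> {}) x" using le_orb by simp
  qed
qed

lemma the_min: "(THE m. is_minimum P le m) = orb \<rho> {}"
proof (rule the_equality)
  show "is_minimum P le (orb \<rho> {})" by (rule is_min)
next
  fix m assume m: "is_minimum P le m"
  have "m \<in> P" "le m (orb \<rho> {})" "le (orb \<rho> {}) m" using m is_min unfolding is_minimum_def by auto
  thus "m = orb \<rho> {}" using poset orbP[of "{}"] unfolding poset_on_def by blast
qed

lemma sat_rank:
  assumes "saturated_chain P le xs" "hd xs = orb \<rho> {}" "i < length xs"
  shows "ocard (xs ! i) = i"
  using assms(3)
proof (induction i)
  case 0 thus ?case using assms(1,2) unfolding saturated_chain_def by (simp add: hd_conv_nth)
next
  case (Suc i)
  have "covers P le (xs ! i) (xs ! Suc i)" using assms(1) Suc(2) unfolding saturated_chain_def by blast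
  thus ?case using cov_rank Suc by simp
qed

lemma sat_len:
  assumes "saturated_chain P le xs" "hd xs = orb \<rho> {}" "last xs = X"
  shows "length xs = Suc (ocard X)"
proof -
  have ne: "xs \<noteq> []" using assms(1) unfolding saturated_chain_def by simp
  have "ocard (xs ! (length xs - 1)) = length xs - 1" using sat_rank[OF assms(1,2)] ne by simp
  thus ?thesis using assms(3) ne by (simp add: last_conv_nth)
qed

lemma sat_exists:
  assumes "A \<subseteq> {1..n}"
  shows "\<exists>xs. saturated_chain P le xs \<and> hd xs = orb \<rho> {} \<and> last xs = orb \<rho> A"
proof -
  have "finite A" using fin_sub assms .
  thus ?thesis using assms
  proof (induction A rule: finite_induct)
    case empty
    have "saturated_chain P le [orb \<rho> {}]" unfolding saturated_chain_def using orbP by simp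
    thus ?case by (intro exI[of _ "[orb \<rho> {}]"] conjI) (assumption, simp, simp)
  next
    case (insert a A)
    have "A \<subseteq> {1..n}" using insert(4) by simp
    then obtain xs where xs: "saturated_chain P le xs" "hd xs = orb \<rho> {}" "last xs = orb \<rho> A"
      using insert.IH by blast
    have ne: "xs \<noteq> []" using xs(1) unfolding saturated_chain_def by simp
    have cv: "covers P le (orb \<rho> A) (orb \<rho> (insert a A))"
      by (rule cov_intro) (use insert in auto)
    have "saturated_chain P le (xs @ [orb \<rho> (insert a A)])"
      unfolding saturated_chain_def
    proof (intro conjI allI impI)
      show "xs @ [orb \<rho> (insert a A)] \<noteq> []" by simp
      show "set (xs @ [orb \<rho> (insert a A)]) \<subseteq> P" using xs(1) orbP insert(4) unfolding saturated_chain_def by auto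
      fix i assume i: "Suc i < length (xs @ [orb \<rho> (insert a A)])"
      show "covers P le ((xs @ [orb \<rho> (insert a A)]) ! i) ((xs @ [orb \<rho> (insert a A)]) ! Suc i)"
      proof (cases "Suc i < length xs")
        case True thus ?thesis using xs(1) unfolding saturated_chain_def by (simp add: nth_append)
      next
        case False
        hence e: "Suc i = length xs" using i by simp
        hence ii: "i = length xs - 1" by simp
        hence "(xs @ [orb \<rho> (insert a A)]) ! i = last xs" using ne e
          by (simp add: nth_append last_conv_nth)
        moreover have "(xs @ [orb \<rho> (insert a A)]) ! Suc i = orb \<rho> (insert a A)" using e by simp
        ultimately show ?thesis using cv xs(3) by simp
      qed
    qed
    moreover have "hd (xs @ [orb \<rho> (insert a A)]) = orb \<rho> {}" using xs ne by simp
    moreover have "last (xs @ [orb \<rho> (insert a A)]) = orb \<rho> (insert a A)" by simp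
    ultimately show ?case by blast
  qed
qed

lemma rank_of_eq: assumes "X \<in> P" shows "rank_of P le X = ocard X"
proof -
  obtain A where A: "A \<subseteq> {1..n}" "X = orb \<rho> A" using assms P_eq by auto
  obtain xs where xs: "saturated_chain P le xs" "hd xs = orb \<rho> {}" "last xs = X" using sat_exists[OF A(1)] A by auto
  show ?thesis unfolding rank_of_def the_min
  proof (rule the_equality)
    show "\<exists>xs. saturated_chain P le xs \<and> hd xs = orb \<rho> {} \<and> last xs = X \<and> length xs = Suc (ocard X)"
      using xs sat_len[OF xs] by blast
  next
    fix k assume "\<exists>xs. saturated_chain P le xs \<and> hd xs = orb \<rho> {} \<and> last xs = X \<and> length xs = Suc k"
    then obtain ys where "saturated_chain P le ys" "hd ys = orb \<rho> {}" "last ys = X" "length ys = Suc k" by blast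
    thus "k = ocard X" using sat_len by fastforce
  qed
qed

lemma ranked: "ranked P le"
  unfolding ranked_def using is_min sat_len by (metis)

lemma finP: "finite P" using P_eq by simp

lemma prank: "poset_rank P le = n"
proof -
  have "rank_of P le ` P = ocard ` P" using rank_of_eq by (simp cong: image_cong)
  moreover have "Max (ocard ` P) = n"
  proof (rule Max_eqI)
    show "finite (ocard ` P)" using finP by simp
    fix y assume "y \<in> ocard ` P"
    then obtain A where "A \<subseteq> {1..n}" "y = ocard (orb \<rho> A)" using P_eq by auto
    thus "y \<le> n" using card_mono[of "{1..n}" A] by simp
  next
    show "n \<in> ocard ` P" using orbP[of "{1..n}"] by (metis card_atLeastAtMost diff_Suc_1 image_eqI ocard_orb order_refl)
  qed
  ultimately show ?thesis unfolding poset_rank_def by simp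
qed

lemma SCO_from_qscd:
  assumes q: "qscd (Pow {1..n}) (orb \<rho>) (\<subseteq>) card n C"
  shows "SCO P le"
  unfolding SCO_def
proof (intro conjI)
  show "finite P" by (rule finP)
  show "poset_on P le" by (rule poset)
  show "ranked P le" by (rule ranked)
  show "\<exists>C. (\<forall>c\<in>C. symmetric_chain P le c) \<and> (\<forall>x\<in>P. \<exists>!c. c \<in> C \<and> x \<in> set c)"
  proof (intro exI[of _ "map (orb \<rho>) ` C"] conjI ballI)
    fix c' assume "c' \<in> map (orb \<rho>) ` C"
    then obtain c where c: "c \<in> C" "c' = map (orb \<rho>) c" by auto
    have cc: "c \<noteq> []" "set c \<subseteq> Pow {1..n}" "chn (\<subseteq>) card c" "card (hd c) + card (last c) = n"
      using qscd_chains[OF q c(1)] by auto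
    have sc: "saturated_chain P le c'"
      unfolding saturated_chain_def
    proof (intro conjI allI impI)
      show "c' \<noteq> []" using cc c by simp
      show "set c' \<subseteq> P" using cc(2) c orbP by auto
      fix i assume i: "Suc i < length c'"
      hence i': "Suc i < length c" using c by simp
      have m: "c ! i \<subseteq> {1..n}" "c ! Suc i \<subseteq> {1..n}" using cc(2) i' nth_mem
        by (metis PowD Suc_lessD subsetD)+
      have "c ! i \<subseteq> c ! Suc i \<and> card (c ! Suc i) = Suc (card (c ! i))" using cc(3) i' unfolding chn_def by blast
      thus "covers P le (c' ! i) (c' ! Suc i)" using cov_intro[OF m] c i' by simp
    qed
    have "hd c \<in> set c" "last c \<in> set c" using cc(1) by auto
    hence hl: "orb \<rho> (hd c) \<in> P" "orb \<rho> (last c) \<in> P" using cc(2) orbP by blast+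
    have "rank_of P le (hd c') + rank_of P le (last c') = poset_rank P le"
      using rank_of_eq[OF hl(1)] rank_of_eq[OF hl(2)] prank cc(1,4) c(2) by (simp add: hd_map last_map)
    thus "symmetric_chain P le c'" using sc unfolding symmetric_chain_def by blast
  next
    fix X assume "X \<in> P"
    then obtain A where A: "A \<subseteq> {1..n}" "X = orb \<rho> A" using P_eq by auto
    have "\<exists>!c. c \<in> C \<and> (\<exists>y\<in>set c. orb \<rho> y = orb \<rho> A)" using q A(1) unfolding qscd_def by blast
    then obtain c where c: "c \<in> C" "\<exists>y\<in>set c. orb \<rho> y = orb \<rho> A"
      and u: "\<And>d. d \<in> C \<Longrightarrow> (\<exists>y\<in>set d. orb \<rho> y = orb \<rho> A) \<Longrightarrow> d = c" by blast
    show "\<exists>!c'. c' \<in> map (orb \<rho>) ` C \<and> X \<in> set c'"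
    proof (rule ex1I[of _ "map (orb \<rho>) c"])
      show "map (orb \<rho>) c \<in> map (orb \<rho>) ` C \<and> X \<in> set (map (orb \<rho>) c)" using c A(2) by auto
    next
      fix d' assume "d' \<in> map (orb \<rho>) ` C \<and> X \<in> set d'"
      then obtain d y where "d \<in> C" "d' = map (orb \<rho>) d" "y \<in> set d" "orb \<rho> y = orb \<rho> A" using A(2) by auto
      thus "d' = map (orb \<rho>) c" using u by blast
    qed
  qed
qed

end




lemma qscd_add_set:
  assumes "finite F"
  shows "qscd (Pow T) (orb \<rho>) (\<subseteq>) card N C \<Longrightarrow> finite T \<Longrightarrow> \<rho> ` T \<subseteq> T \<Longrightarrow> \<forall>y\<in>T. \<rho> (\<rho> y) = y
    \<Longrightarrow> F \<inter> T = {} \<Longrightarrow> \<forall>x\<in>F. \<rho> x = x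
    \<Longrightarrow> \<exists>C'. qscd (Pow (T \<union> F)) (orb \<rho>) (\<subseteq>) card (N + card F) C'"
  using assms
proof (induction F)
  case empty thus ?case by auto
next
  case (insert x F)
  obtain C1 where C1: "qscd (Pow (T \<union> F)) (orb \<rho>) (\<subseteq>) card (N + card F) C1"
    using insert.IH insert.prems by auto
  have "\<exists>C'. qscd (Pow (insert x (T \<union> F))) (orb \<rho>) (\<subseteq>) card (Suc (N + card F)) C'"
  proof (rule qscd_add[OF C1])
    show "finite (T \<union> F)" using insert by simp
    show "\<rho> ` (T \<union> F) \<subseteq> T \<union> F" using insert.prems by auto
    show "\<forall>y\<in>T \<union> F. \<rho> (\<rho> y) = y" using insert.prems by auto
    show "x \<notin> T \<union> F" using insert.prems insert.hyps by auto
    show "\<rho> x = x" using insert.prems by auto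
  qed
  moreover have "insert x (T \<union> F) = T \<union> insert x F" by auto
  moreover have "Suc (N + card F) = N + card (insert x F)" using insert.hyps by simp
  ultimately show ?case by metis
qed

lemma bool_scd:
  fixes L :: "nat set"
  assumes "finite L"
  shows "\<exists>C. qscd (Pow L) id (\<subseteq>) card (card L) C"
proof -
  obtain C where C: "qscd (Pow ({} \<union> L)) (orb id) (\<subseteq>) card (0 + card L) C"
    using qscd_add_set[OF assms qscd_base[of id]] by auto
  have C': "qscd (Pow L) (orb id) (\<subseteq>) card (card L) C" using C by simp
  have "qscd (Pow L) id (\<subseteq>) card (card L) (map id ` C)"
  proof (rule qscd_transfer[OF C'])
    fix x y :: "nat set"
    show "id (id x) = id (id y) \<longleftrightarrow> orb id x = orb id y" unfolding orb_def by simp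
  qed auto
  thus ?thesis by blast
qed

context invo
begin

definition "LL = {i \<in> {1..n}. i < \<rho> i}"
definition "RR = {i \<in> {1..n}. \<rho> i < i}"
definition "FF = {i \<in> {1..n}. \<rho> i = i}"

lemma in_n: "\<rho> i \<in> {1..n} \<longleftrightarrow> i \<in> {1..n}" using permutes_in_image[OF perm] .

lemma RR_img: "RR = \<rho> ` LL"
proof
  show "RR \<subseteq> \<rho> ` LL"
  proof
    fix i assume i: "i \<in> RR"
    hence i1: "i \<in> {1..n}" "\<rho> i < i" unfolding RR_def by auto
    have "\<rho> i \<in> {1..n}" using i1(1) in_n by blast
    moreover have "\<rho> i < \<rho> (\<rho> i)" using i1(2) by simp
    ultimately have "\<rho> i \<in> LL" unfolding LL_def by blast
    thus "i \<in> \<rho> ` LL" by (metis image_eqI rr)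
  qed
  show "\<rho> ` LL \<subseteq> RR"
  proof
    fix i assume "i \<in> \<rho> ` LL"
    then obtain j where j: "j \<in> {1..n}" "j < \<rho> j" "i = \<rho> j" unfolding LL_def by blast
    have "i \<in> {1..n}" using j(1,3) in_n by blast
    moreover have "\<rho> i < i" using j by simp
    ultimately show "i \<in> RR" unfolding RR_def by blast
  qed
qed

lemma LL_img: "\<rho> ` RR = LL" using RR_img by simp

lemma disj: "LL \<inter> RR = {}" "FF \<inter> (LL \<union> RR) = {}" unfolding LL_def RR_def FF_def by auto

lemma cover: "LL \<union> RR \<union> FF = {1..n}" unfolding LL_def RR_def FF_def by auto

lemma finL: "finite LL" "finite RR" "finite FF" unfolding LL_def RR_def FF_def by auto

definition gg :: "nat set \<times> nat set \<Rightarrow> nat set" where "gg p = fst p \<union> \<rho> ` snd p"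

lemma gg_parts:
  assumes "X \<subseteq> LL" "Y \<subseteq> LL"
  shows "gg (X, Y) \<inter> LL = X" "\<rho> ` (gg (X, Y) \<inter> RR) = Y"
proof -
  have "\<rho> ` Y \<subseteq> RR" using assms(2) RR_img by auto
  thus "gg (X, Y) \<inter> LL = X" using assms(1) disj(1) unfolding gg_def by auto
  have "gg (X, Y) \<inter> RR = \<rho> ` Y" using assms \<open>\<rho> ` Y \<subseteq> RR\<close> disj(1) unfolding gg_def by auto
  thus "\<rho> ` (gg (X, Y) \<inter> RR) = Y" by simp
qed

lemma gg_inj:
  assumes "X \<subseteq> LL" "Y \<subseteq> LL" "X' \<subseteq> LL" "Y' \<subseteq> LL" "gg (X, Y) = gg (X', Y')"
  shows "X = X' \<and> Y = Y'"
  using gg_parts[OF assms(1,2)] gg_parts[OF assms(3,4)] assms(5) by metis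

lemma gg_orb: "orb \<rho> (gg (X, Y)) = {gg (X, Y), gg (Y, X)}"
  unfolding orb_def gg_def by (simp add: image_Un image_image Un_commute)

lemma pair_scd: "\<exists>C. qscd (Pow (LL \<union> RR)) (orb \<rho>) (\<subseteq>) card (2 * card LL) C"
proof -
  obtain CB where CB: "qscd (Pow LL) id (\<subseteq>) card (card LL) CB" using bool_scd finL(1) by blast
  obtain C2 where C2: "qscd (Pow LL \<times> Pow LL) upair (pst (\<subseteq>)) (prk card) (2 * card LL) C2"
    using qscd_symsq[OF CB] finL(1) by blast
  have "qscd (Pow (LL \<union> RR)) (orb \<rho>) (\<subseteq>) card (2 * card LL) (map gg ` C2)"
  proof (rule qscd_transfer[OF C2])
    show "gg ` (Pow LL \<times> Pow LL) = Pow (LL \<union> RR)"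
    proof
      show "gg ` (Pow LL \<times> Pow LL) \<subseteq> Pow (LL \<union> RR)" using RR_img unfolding gg_def by auto
      show "Pow (LL \<union> RR) \<subseteq> gg ` (Pow LL \<times> Pow LL)"
      proof
        fix A assume A: "A \<in> Pow (LL \<union> RR)"
        have "gg (A \<inter> LL, \<rho> ` (A \<inter> RR)) = A" using A unfolding gg_def by auto
        moreover have "\<rho> ` (A \<inter> RR) \<subseteq> LL" using LL_img by auto
        ultimately show "A \<in> gg ` (Pow LL \<times> Pow LL)" by (metis IntE PowI SigmaI image_eqI subsetI)
      qed
    qed
  next
    fix x y assume "x \<in> Pow LL \<times> Pow LL" "y \<in> Pow LL \<times> Pow LL" "pst (\<subseteq>) x y"
    thus "gg x \<subseteq> gg y" unfolding gg_def by (auto split: prod.splits)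
  next
    fix x assume x: "x \<in> Pow LL \<times> Pow LL"
    obtain X Y where XY: "x = (X, Y)" "X \<subseteq> LL" "Y \<subseteq> LL" using x by auto
    have fY: "finite Y" using XY finL(1) finite_subset by auto
    have fin: "finite X" "finite (\<rho> ` Y)" using XY finL(1) finite_subset fY by auto
    have "X \<inter> \<rho> ` Y = {}" using XY disj(1) RR_img by auto
    hence "card (gg x) = card X + card (\<rho> ` Y)" unfolding XY(1) gg_def using card_Un_disjoint[OF fin \<open>X \<inter> \<rho> ` Y = {}\<close>] by simp
    thus "card (gg x) = prk card x" using XY by simp
  next
    fix x y assume x: "x \<in> Pow LL \<times> Pow LL" and y: "y \<in> Pow LL \<times> Pow LL"
    obtain X Y where XY: "x = (X, Y)" "X \<subseteq> LL" "Y \<subseteq> LL" using x by auto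
    obtain X' Y' where XY': "y = (X', Y')" "X' \<subseteq> LL" "Y' \<subseteq> LL" using y by auto
    have "orb \<rho> (gg x) = orb \<rho> (gg y) \<longleftrightarrow> (X = X' \<and> Y = Y') \<or> (X = Y' \<and> Y = X')"
    proof
      assume "orb \<rho> (gg x) = orb \<rho> (gg y)"
      hence "{gg (X, Y), gg (Y, X)} = {gg (X', Y'), gg (Y', X')}" using XY XY' gg_orb by simp
      hence "(gg (X, Y) = gg (X', Y')) \<or> (gg (X, Y) = gg (Y', X'))" by (simp add: doubleton_eq_iff) blast
      thus "(X = X' \<and> Y = Y') \<or> (X = Y' \<and> Y = X')" using gg_inj XY XY' by blast
    next
      assume "(X = X' \<and> Y = Y') \<or> (X = Y' \<and> Y = X')"
      thus "orb \<rho> (gg x) = orb \<rho> (gg y)" using XY XY' gg_orb by auto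
    qed
    also have "\<dots> \<longleftrightarrow> upair x = upair y" using XY XY' by (auto simp: doubleton_eq_iff)
    finally show "orb \<rho> (gg x) = orb \<rho> (gg y) \<longleftrightarrow> upair x = upair y" .
  qed
  thus ?thesis by blast
qed

lemma full_scd: "\<exists>C. qscd (Pow {1..n}) (orb \<rho>) (\<subseteq>) card n C"
proof -
  obtain C0 where C0: "qscd (Pow (LL \<union> RR)) (orb \<rho>) (\<subseteq>) card (2 * card LL) C0" using pair_scd by blast
  have "\<exists>C'. qscd (Pow ((LL \<union> RR) \<union> FF)) (orb \<rho>) (\<subseteq>) card (2 * card LL + card FF) C'"
  proof (rule qscd_add_set[OF finL(3) C0])
    show "finite (LL \<union> RR)" using finL by simp
    show "\<rho> ` (LL \<union> RR) \<subseteq> LL \<union> RR" using RR_img LL_img by auto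
    show "\<forall>y\<in>LL \<union> RR. \<rho> (\<rho> y) = y" by simp
    show "FF \<inter> (LL \<union> RR) = {}" by (rule disj(2))
    show "\<forall>x\<in>FF. \<rho> x = x" unfolding FF_def by simp
  qed
  moreover have "2 * card LL + card FF = n"
  proof -
    have "card RR = card LL" using RR_img by simp
    have "card (LL \<union> RR \<union> FF) = card (LL \<union> RR) + card FF"
      using card_Un_disjoint[of "LL \<union> RR" FF] finL disj(2) by (simp add: Int_commute)
    also have "card (LL \<union> RR) = card LL + card RR" using card_Un_disjoint[OF finL(1,2) disj(1)] .
    finally show ?thesis using cover \<open>card RR = card LL\<close> by simp
  qed
  ultimately show ?thesis using cover by metis
qed

end

theorem theorem2p5:
  fixes n :: nat and \<rho> :: "nat \<Rightarrow> nat"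
  assumes "\<rho> permutes {1..n}"
    and "\<rho> \<noteq> id"
    and "\<rho> \<circ> \<rho> = id"
  shows "SCO (Bn_quot n {id, \<rho>}) Bn_quot_le"
proof -
  interpret invo n \<rho> using assms(1,3) by unfold_locales
  obtain C where "qscd (Pow {1..n}) (orb \<rho>) (\<subseteq>) card n C" using full_scd by blast
  thus ?thesis by (rule SCO_from_qscd)
qed



end
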